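(* Let $\alpha\in(0,2]$, $T>0$ and $\mathcal{S}=[-T,T]\times\mathbb{R}^N$. Then $d$ is a quasi-distance on $\mathcal{S}$: $d((t,\mathbf{x}),(s,\mathbf{y}))=0$ if and only if $(t,\mathbf{x})=(s,\mathbf{y})$, $d$ is symmetric, and there exists $C>0$ depending only on $\alpha$, $A$ and the dimensions such that for all $(t,\mathbf{x}),(\sigma,\boldsymbol{\xi}),(s,\mathbf{y})\in\mathcal{S}$, $$d((t,\mathbf{x}),(s,\mathbf{y}))\le C\big(d((t,\mathbf{x}),(\sigma,\boldsymbol{\xi}))+d((\sigma,\boldsymbol{\xi}),(s,\mathbf{y}))\big).$$ Moreover, $(\mathcal{S},d,\mu)$, with $\mu$ the Lebesgue measure, is a homogeneous space.
   Context: $n\ge1$, $d_1\ge\dots\ge d_n>0$, $N=\sum_id_i$, $\mathbf{x}=(\mathbf{x}_1,\dots,\mathbf{x}_n)$ with $\mathbf{x}_i\in\mathbb{R}^{d_i}$. $A\in\mathbb{R}^{N\times N}$ is a block matrix whose only nonzero blocks are $A_{i,i-1}\in\mathbb{R}^{d_i\times d_{i-1}}$, $i=2,\dots,n$, each of rank $d_i$. $\rho(t,\mathbf{x})=|t|^{1/\alpha}+\sum_{i=1}^n|\mathbf{x}_i|^{\frac{1}{1+\alpha(i-1)}}$ and $d((t,\mathbf{x}),(s,\mathbf{y}))=\frac12\big(\rho(t-s,e^{(s-t)A}\mathbf{x}-\mathbf{y})+\rho(t-s,\mathbf{x}-e^{(t-s)A}\mathbf{y})\big)$. A homogeneous space is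 a triple $(X,d,\mu)$ where $d$ is a quasi-distance on $X$ (positive off the diagonal, symmetric, quasi-triangle inequality with some constant), the balls $B(x,r)=\{y:d(y,x)<r\}$ are open in the topology they generate, and $\mu$ is a Borel measure with the doubling property: there is $A'>0$ with $0<\mu(B(x,2r))\le A'\mu(B(x,r))<\infty$ for all $x\in X$, $r>0$. *)

theory Defs
  imports "HOL-Analysis.Analysis"
begin

text \<open>Coordinates of R^N are given by the finite type 'N; blk assigns each coordinate
  its block index in 1..n.\<close>

primrec mpow :: "real^'N^'N \<Rightarrow> nat \<Rightarrow> real^'N^'N" where
  "mpow M 0 = mat 1"
| "mpow M (Suc k) = M ** mpow M k"

definition mexp :: "real^'N^'N \<Rightarrow> real^'N^'N" where
  "mexp M = (\<Sum>k. (1 / fact k) *\<^sub>R mpow M k)"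

definition blockpart :: "('N \<Rightarrow> nat) \<Rightarrow> nat \<Rightarrow> real^'N \<Rightarrow> real^'N" where
  "blockpart blk i x = (\<chi> k. if blk k = i then x $ k else 0)"

definition subblock :: "('N \<Rightarrow> nat) \<Rightarrow> real^'N^'N \<Rightarrow> nat \<Rightarrow> nat \<Rightarrow> real^'N^'N" where
  "subblock blk A i j = (\<chi> k l. if blk k = i \<and> blk l = j then A $ k $ l else 0)"

definition block_setting ::
  "nat \<Rightarrow> (nat \<Rightarrow> nat) \<Rightarrow> ('N::finite \<Rightarrow> nat) \<Rightarrow> real^'N^'N \<Rightarrow> bool" where
  "block_setting n dd blk A \<longleftrightarrow>
     n \<ge> 1
   \<and> (\<forall>i j. 1 \<le> i \<and> i \<le> j \<and> j \<le> n \<longrightarrow> dd j \<le> dd i)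
   \<and> (\<forall>i\<in>{1..n}. dd i > 0)
   \<and> (\<forall>k. blk k \<in> {1..n})
   \<and> (\<forall>i\<in>{1..n}. card {k. blk k = i} = dd i)
   \<and> (\<forall>k l. blk k \<noteq> blk l + 1 \<longrightarrow> A $ k $ l = 0)
   \<and> (\<forall>i\<in>{2..n}. rank (subblock blk A i (i - 1)) = dd i)"

definition rho :: "real \<Rightarrow> nat \<Rightarrow> ('N \<Rightarrow> nat) \<Rightarrow> real \<Rightarrow> real^'N \<Rightarrow> real" where
  "rho \<alpha> n blk t x = \<bar>t\<bar> powr (1 / \<alpha>)
     + (\<Sum>i=1..n. norm (blockpart blk i x) powr (1 / (1 + \<alpha> * (real i - 1))))"

definition qdist :: "real \<Rightarrow> nat \<Rightarrow> ('N \<Rightarrow> nat) \<Rightarrow> real^'N^'N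
    \<Rightarrow> real \<times> (real^'N) \<Rightarrow> real \<times> (real^'N) \<Rightarrow> real" where
  "qdist \<alpha> n blk A p q = (case p of (t, x) \<Rightarrow> case q of (s, y) \<Rightarrow>
     (rho \<alpha> n blk (t - s) (mexp ((s - t) *\<^sub>R A) *v x - y)
      + rho \<alpha> n blk (t - s) (x - mexp ((t - s) *\<^sub>R A) *v y)) / 2)"

definition strip :: "real \<Rightarrow> (real \<times> (real^'N)) set" where
  "strip T = {-T..T} \<times> UNIV"

definition dball :: "'a set \<Rightarrow> ('a \<Rightarrow> 'a \<Rightarrow> real) \<Rightarrow> 'a \<Rightarrow> real \<Rightarrow> 'a set" where
  "dball X d x r = {y\<in>X. d y x < r}"

definition quasi_distance :: "'a set \<Rightarrow> ('a \<Rightarrow> 'a \<Rightarrow> real) \<Rightarrow> bool" where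
  "quasi_distance X d \<longleftrightarrow>
     (\<forall>x\<in>X. \<forall>y\<in>X. d x y \<ge> 0 \<and> (d x y = 0 \<longleftrightarrow> x = y))
   \<and> (\<forall>x\<in>X. \<forall>y\<in>X. d x y = d y x)
   \<and> (\<exists>C>0. \<forall>x\<in>X. \<forall>y\<in>X. \<forall>z\<in>X. d x z \<le> C * (d x y + d y z))"

definition d_open :: "'a set \<Rightarrow> ('a \<Rightarrow> 'a \<Rightarrow> real) \<Rightarrow> 'a set \<Rightarrow> bool" where
  "d_open X d U \<longleftrightarrow> U \<subseteq> X \<and> (\<forall>x\<in>U. \<exists>r>0. dball X d x r \<subseteq> U)"

definition homogeneous_space :: "'a set \<Rightarrow> ('a \<Rightarrow> 'a \<Rightarrow> real) \<Rightarrow> 'a measure \<Rightarrow> bool" where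
  "homogeneous_space X d \<mu> \<longleftrightarrow>
     quasi_distance X d
   \<and> (\<forall>x\<in>X. \<forall>r>0. d_open X d (dball X d x r))
   \<and> space \<mu> = X
   \<and> sets \<mu> = sigma_sets X {U. d_open X d U}
   \<and> (\<exists>A'>0. \<forall>x\<in>X. \<forall>r>0.
        0 < emeasure \<mu> (dball X d x (2 * r))
      \<and> emeasure \<mu> (dball X d x (2 * r)) \<le> ennreal A' * emeasure \<mu> (dball X d x r)
      \<and> emeasure \<mu> (dball X d x r) < \<infinity>)"

end

theory Submission
  imports Defs
begin



lemma mmult_scaleR_left: "(c *\<^sub>R M) ** (X::real^'n^'n) = c *\<^sub>R (M ** X)"
  by (simp add: matrix_matrix_mult_def vec_eq_iff sum_distrib_left algebra_simps)
lemma mmult_scaleR_right: "M ** (c *\<^sub>R (X::real^'n^'n)) = c *\<^sub>R (M ** X)"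
  by (simp add: matrix_matrix_mult_def vec_eq_iff sum_distrib_left algebra_simps)

lemma mpow_scaleR: "mpow (c *\<^sub>R M) k = c ^ k *\<^sub>R mpow M k"
  by (induction k) (simp_all add: mmult_scaleR_left mmult_scaleR_right)

lemma mv_add: "((M::real^'n^'m) + N) *v x = M *v x + N *v x"
  by (simp add: matrix_vector_mult_def vec_eq_iff sum.distrib algebra_simps)
lemma mv_scaleR: "(c *\<^sub>R (M::real^'n^'m)) *v x = c *\<^sub>R (M *v x)"
  by (simp add: matrix_vector_mult_def vec_eq_iff sum_distrib_left algebra_simps)
lemma mv_sum: "(\<Sum>k\<in>K. (f k::real^'n^'m)) *v x = (\<Sum>k\<in>K. f k *v x)"
  by (induction K rule: infinite_finite_induct) (simp_all add: mv_add)

lemma mpow_add: "mpow M (j + k) = mpow M j ** mpow M (k::nat)"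
  by (induction j) (simp_all add: matrix_mul_assoc)

lemma powr_subadd:
  fixes x y e :: real
  assumes "0 \<le> x" "0 \<le> y" "0 < e" "e \<le> 1"
  shows "(x + y) powr e \<le> x powr e + y powr e"
proof (cases "x = 0 \<or> y = 0")
  case True then show ?thesis using assms by auto
next
  case False
  then have xp: "x > 0" and yp: "y > 0" using assms by auto
  have s1: "(x + y) powr e = (x+y) powr (e - 1) * (x + y)"
    using powr_add[of "x+y" "e-1" 1] xp yp by simp
  have s2: "x powr e = x powr (e - 1) * x"
    using powr_add[of "x" "e-1" 1] xp by simp
  have s3: "y powr e = y powr (e - 1) * y"
    using powr_add[of "y" "e-1" 1] yp by simp
  have "(x+y) powr (e - 1) \<le> x powr (e - 1)"
    using xp yp assms by (intro powr_mono2') auto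
  moreover have "(x+y) powr (e - 1) \<le> y powr (e - 1)"
    using xp yp assms by (intro powr_mono2') auto
  ultimately have "(x+y) powr (e - 1) * x + (x+y) powr (e - 1) * y \<le> x powr (e - 1) * x + y powr (e - 1) * y"
    using xp yp by (intro add_mono mult_right_mono) auto
  then show ?thesis unfolding s1 s2 s3 by (simp add: distrib_left)
qed

lemma powr_subadd_sum:
  fixes f :: "'a \<Rightarrow> real"
  assumes "\<And>i. i \<in> I \<Longrightarrow> 0 \<le> f i" "0 < e" "e \<le> 1"
  shows "(\<Sum>i\<in>I. f i) powr e \<le> (\<Sum>i\<in>I. f i powr e)"
  using assms(1)
proof (induction I rule: infinite_finite_induct)
  case (insert x F)
  have "(\<Sum>i\<in>insert x F. f i) powr e = (f x + (\<Sum>i\<in>F. f i)) powr e"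
    using insert by simp
  also have "\<dots> \<le> f x powr e + (\<Sum>i\<in>F. f i) powr e"
    using insert assms by (intro powr_subadd) (auto intro: sum_nonneg)
  also have "\<dots> \<le> f x powr e + (\<Sum>i\<in>F. f i powr e)"
    using insert by auto
  finally show ?case using insert by simp
qed auto

lemma powr_add2:
  fixes a b p :: real
  assumes "0 < p"
  shows "\<bar>a + b\<bar> powr p \<le> 2 powr p * (\<bar>a\<bar> powr p + \<bar>b\<bar> powr p)"
proof -
  have "\<bar>a + b\<bar> \<le> 2 * max \<bar>a\<bar> \<bar>b\<bar>" by auto
  then have "\<bar>a + b\<bar> powr p \<le> (2 * max \<bar>a\<bar> \<bar>b\<bar>) powr p"
    using assms by (intro powr_mono2) auto
  also have "\<dots> = 2 powr p * max \<bar>a\<bar> \<bar>b\<bar> powr p"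
    by (simp add: powr_mult)
  also have "max \<bar>a\<bar> \<bar>b\<bar> powr p \<le> \<bar>a\<bar> powr p + \<bar>b\<bar> powr p"
    by (auto simp: max_def)
  finally show ?thesis by (simp add: mult_left_mono)
qed

lemma key_ineq:
  fixes a y al p :: real and k :: nat
  assumes "0 \<le> a" "0 \<le> y" "0 < al" "1 \<le> p"
  shows "(a ^ k * y) powr (1 / (p + al * k)) \<le> a powr (1/al) + y powr (1/p)"
proof (cases "a ^ k * y = 0")
  case True
  have "(a ^ k * y) powr (1 / (p + al * k)) = 0 powr (1 / (p + al * k))" using True by (rule arg_cong)
  then have z: "(a ^ k * y) powr (1 / (p + al * k)) = 0" by simp
  have nn: "0 \<le> a powr (1/al) + y powr (1/p)" by (intro add_nonneg_nonneg powr_ge_zero)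
  show ?thesis by (subst z) (rule nn)
next
  case False
  then have "y \<noteq> 0" by auto
  then have yp: "y > 0" using assms(2) by linarith
  show ?thesis
  proof (cases "k = 0")
    case True then show ?thesis by simp
  next
    case False
    have "a \<noteq> 0" using \<open>a ^ k * y \<noteq> 0\<close> False by auto
    then have ap: "a > 0" using assms(1) by linarith
    define m where "m = max (a powr (1/al)) (y powr (1/p))"
    have mp: "m > 0" using ap unfolding m_def by (simp add: less_max_iff_disj)
    have "a = (a powr (1/al)) powr al" using ap assms by (simp add: powr_powr)
    also have "\<dots> \<le> m powr al" using assms unfolding m_def by (intro powr_mono2) auto
    finally have a_le: "a \<le> m powr al" .
    have "y = (y powr (1/p)) powr p" using yp assms by (simp add: powr_powr)
    also have "\<dots> \<le> m powr p" using assms unfolding m_def by (intro powr_mono2) auto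
    finally have y_le: "y \<le> m powr p" .
    have "a ^ k \<le> (m powr al) ^ k" using a_le assms by (intro power_mono) auto
    also have "\<dots> = (m powr al) powr (real k)" using mp by (simp add: powr_realpow)
    also have "\<dots> = m powr (al * k)" by (simp add: powr_powr)
    finally have "a ^ k * y \<le> m powr (al * k) * m powr p"
      using y_le yp by (intro mult_mono) auto
    also have "\<dots> = m powr (p + al * k)" by (simp add: powr_add ac_simps)
    finally have "(a ^ k * y) powr (1 / (p + al * k)) \<le> (m powr (p + al * k)) powr (1 / (p + al * k))"
      using assms by (intro powr_mono2) auto
    also have "\<dots> = m" proof -
      have "p + al * k > 0" using assms by (simp add: add_pos_nonneg)
      then show ?thesis using mp by (simp add: powr_powr)
    qed
    also have "m \<le> a powr (1/al) + y powr (1/p)" unfolding m_def by auto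
    finally show ?thesis .
  qed
qed




lemma mv_right_add: "(M::real^'n^'m) *v (x + y) = M *v x + M *v y"
  by (simp add: matrix_vector_mult_def vec_eq_iff sum.distrib algebra_simps)
lemma mv_right_scaleR: "(M::real^'n^'m) *v (c *\<^sub>R x) = c *\<^sub>R (M *v x)"
  by (simp add: matrix_vector_mult_def vec_eq_iff sum_distrib_left algebra_simps)
lemma mv_right_sum: "(M::real^'n^'m) *v (\<Sum>k\<in>K. f k) = (\<Sum>k\<in>K. M *v f k)"
  by (induction K rule: infinite_finite_induct) (simp_all add: mv_right_add)

locale qs =
  fixes al :: real and n :: nat and dd :: "nat \<Rightarrow> nat" and blk :: "'N::finite \<Rightarrow> nat"
    and A :: "real^'N^'N"
  assumes bs: "block_setting n dd blk A" and alpos: "0 < al"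
begin

lemma n1: "n \<ge> 1" using bs by (simp add: block_setting_def)
lemma blk_ge1: "1 \<le> blk k" using bs by (auto simp: block_setting_def)
lemma blk_le: "blk k \<le> n" using bs by (auto simp: block_setting_def)
lemma A_entry: "A $ k $ l \<noteq> 0 \<Longrightarrow> blk k = blk l + 1" using bs by (auto simp: block_setting_def)

lemma mpow_entry: "mpow A m $ a $ b \<noteq> 0 \<Longrightarrow> blk a = blk b + m"
proof (induction m arbitrary: a b)
  case 0 then show ?case by (auto simp: mat_def split: if_splits)
next
  case (Suc m)
  then have "(\<Sum>c\<in>UNIV. A$a$c * mpow A m $ c $ b) \<noteq> 0" by (simp add: matrix_matrix_mult_def)
  then obtain c where "A$a$c * mpow A m $c$b \<noteq> 0" by (meson sum.neutral)
  then have "A$a$c \<noteq> 0" "mpow A m $c$b \<noteq> 0" by auto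
  then show ?case using Suc.IH A_entry by force
qed

lemma mpow_vanish: "n \<le> m \<Longrightarrow> mpow A m = 0"
proof -
  assume "n \<le> m"
  have "mpow A m $ a $ b = 0" for a b
  proof (rule ccontr)
    assume "mpow A m $ a $ b \<noteq> 0"
    then have "blk a = blk b + m" by (rule mpow_entry)
    then show False using blk_ge1[of b] blk_le[of a] \<open>n \<le> m\<close> by linarith
  qed
  then show ?thesis by (simp add: vec_eq_iff)
qed

definition E :: "real \<Rightarrow> real^'N^'N" where
  "E \<tau> = (\<Sum>k<n. (\<tau>^k / fact k) *\<^sub>R mpow A k)"

lemma mexp_E: "mexp (\<tau> *\<^sub>R A) = E \<tau>"
proof -
  have "mexp (\<tau> *\<^sub>R A) = (\<Sum>k. (1 / fact k) *\<^sub>R (\<tau> ^ k *\<^sub>R mpow A k))"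
    unfolding mexp_def mpow_scaleR ..
  also have "\<dots> = (\<Sum>k<n. (1 / fact k) *\<^sub>R (\<tau> ^ k *\<^sub>R mpow A k))"
    by (rule suminf_finite) (auto simp: mpow_vanish)
  also have "\<dots> = E \<tau>" unfolding E_def by (rule sum.cong) auto
  finally show ?thesis .
qed

lemma Ev: "E \<tau> *v x = (\<Sum>k<n. (\<tau>^k / fact k) *\<^sub>R (mpow A k *v x))"
  by (simp add: E_def mv_sum mv_scaleR)

lemma E0: "E 0 *v x = x"
proof -
  obtain m where m: "n = Suc m" using n1 by (cases n) auto
  show ?thesis unfolding Ev unfolding m sum.lessThan_Suc_shift by simp
qed

lemma E_mult: "E a *v (E b *v x) = E (a + b) *v x"
proof -
  define g where "g m = mpow A m *v x" for m
  have g0: "n \<le> m \<Longrightarrow> g m = 0" for m by (simp add: g_def mpow_vanish)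
  define F where "F j k = (a^j / fact j * (b^k / fact k)) *\<^sub>R g (j + k)" for j k
  have mm: "mpow A j *v (mpow A k *v x) = g (j + k)" for j k
    by (simp add: g_def matrix_vector_mul_assoc mpow_add)
  have "E a *v (E b *v x) = (\<Sum>j<n. (a^j / fact j) *\<^sub>R (mpow A j *v (E b *v x)))"
    by (rule Ev)
  also have "\<dots> = (\<Sum>j<n. \<Sum>k<n. F j k)"
    unfolding Ev[of b] mv_right_sum mv_right_scaleR mm F_def
    by (simp add: scaleR_sum_right)
  also have "\<dots> = (\<Sum>(j,k)\<in>{..<n} \<times> {..<n}. F j k)"
    by (simp add: sum.cartesian_product)
  also have "\<dots> = (\<Sum>(j,k)\<in>{(j,k). j + k < n}. F j k)"
    by (rule sum.mono_neutral_right) (auto simp: F_def, metis g0 not_le)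
  also have "\<dots> = (\<Sum>m<n. \<Sum>i\<le>m. F i (m - i))"
    by (rule sum.triangle_reindex)
  also have "\<dots> = (\<Sum>m<n. ((a + b)^m / fact m) *\<^sub>R g m)"
  proof (rule sum.cong)
    fix m assume "m \<in> {..<n}"
    have "(\<Sum>i\<le>m. F i (m - i)) = (\<Sum>i\<le>m. a^i / fact i * (b^(m-i) / fact (m-i))) *\<^sub>R g m"
      unfolding F_def scaleR_sum_left by (rule sum.cong) auto
    also have "(\<Sum>i\<le>m. a^i / fact i * (b^(m-i) / fact (m-i))) = (a + b)^m / fact m"
    proof -
      have "(a + b)^m / fact m = (\<Sum>i\<le>m. of_nat (m choose i) * a^i * b^(m-i)) / fact m"
        by (simp add: binomial_ring)
      also have "\<dots> = (\<Sum>i\<le>m. of_nat (m choose i) * a^i * b^(m-i) / fact m)"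
        by (simp add: sum_divide_distrib)
      also have "\<dots> = (\<Sum>i\<le>m. a^i / fact i * (b^(m-i) / fact (m-i)))"
        by (rule sum.cong) (auto simp: binomial_fact)
      finally show ?thesis by simp
    qed
    finally show "(\<Sum>i\<le>m. F i (m - i)) = ((a + b)^m / fact m) *\<^sub>R g m" .
  qed simp
  also have "\<dots> = E (a + b) *v x" unfolding Ev g_def ..
  finally show ?thesis .
qed

lemma E_inv: "E (-\<tau>) *v (E \<tau> *v x) = x" and E_inv': "E \<tau> *v (E (-\<tau>) *v x) = x"
  by (simp_all add: E_mult E0)

end



context qs begin

abbreviation bp where "bp i v \<equiv> blockpart blk i v"

lemma bp_add: "bp i (x + y) = bp i x + bp i y"
  by (simp add: blockpart_def vec_eq_iff)
lemma bp_diff: "bp i (x - y) = bp i x - bp i y"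
  by (simp add: blockpart_def vec_eq_iff)
lemma bp_minus: "bp i (- x) = - bp i x"
  by (simp add: blockpart_def vec_eq_iff)
lemma bp_scaleR: "bp i (c *\<^sub>R x) = c *\<^sub>R bp i x"
  by (simp add: blockpart_def vec_eq_iff)
lemma bp_zero: "bp i 0 = 0"
  by (simp add: blockpart_def vec_eq_iff)
lemma bp_sum: "bp i (\<Sum>k\<in>K. f k) = (\<Sum>k\<in>K. bp i (f k))"
  by (induction K rule: infinite_finite_induct) (simp_all add: bp_add bp_zero)
lemma bp0: "bp 0 v = 0"
proof -
  have "(bp 0 v) $ a = 0" for a using blk_ge1[of a] by (simp add: blockpart_def)
  then show ?thesis by (simp add: vec_eq_iff)
qed

lemma bp_mpow: "bp i (mpow A k *v v) = mpow A k *v bp (i - k) v"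
proof -
  have "(bp i (mpow A k *v v)) $ a = (mpow A k *v bp (i - k) v) $ a" for a
  proof -
    have "(bp i (mpow A k *v v)) $ a = (\<Sum>b\<in>UNIV. if blk a = i then mpow A k $ a $ b * v $ b else 0)"
      by (simp add: blockpart_def matrix_vector_mult_def)
    also have "\<dots> = (\<Sum>b\<in>UNIV. mpow A k $ a $ b * (if blk b = i - k then v $ b else 0))"
    proof (rule sum.cong)
      fix b
      show "(if blk a = i then mpow A k $ a $ b * v $ b else 0) = mpow A k $ a $ b * (if blk b = i - k then v $ b else 0)"
      proof (cases "mpow A k $ a $ b = 0")
        case False
        then have e: "blk a = blk b + k" by (rule mpow_entry)
        have "blk a = i \<longleftrightarrow> blk b = i - k" using e blk_ge1[of b] by auto
        then show ?thesis by simp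
      qed simp
    qed simp
    also have "\<dots> = (mpow A k *v bp (i - k) v) $ a"
      by (simp add: blockpart_def matrix_vector_mult_def)
    finally show ?thesis .
  qed
  then show ?thesis by (simp add: vec_eq_iff)
qed

lemma norm_bp_le: "norm (bp i v) \<le> norm v"
  by (rule norm_le_componentwise_cart) (simp add: blockpart_def)

lemma sum_bp: "(\<Sum>i\<in>{1..n}. bp i v) = v"
proof -
  have "(\<Sum>i\<in>{1..n}. bp i v) $ a = v $ a" for a
    using blk_ge1[of a] blk_le[of a] by (simp add: blockpart_def)
  then show ?thesis by (simp add: vec_eq_iff)
qed

lemma norm_le_bp: "norm v \<le> (\<Sum>i\<in>{1..n}. norm (bp i v))"
proof -
  have "norm v = norm (\<Sum>i\<in>{1..n}. bp i v)" using sum_bp[of v] by simp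
  also have "\<dots> \<le> (\<Sum>i\<in>{1..n}. norm (bp i v))" by (rule norm_sum)
  finally show ?thesis .
qed

definition ex :: "nat \<Rightarrow> real" where "ex i = 1 / (1 + al * (real i - 1))"

lemma ex_pos: "1 \<le> i \<Longrightarrow> 0 < ex i"
  unfolding ex_def using alpos by (simp add: add_pos_nonneg)
lemma ex_le1: "1 \<le> i \<Longrightarrow> ex i \<le> 1"
  unfolding ex_def using alpos by (simp add: divide_le_eq_1 add_pos_nonneg)

definition rho0 :: "real^'N \<Rightarrow> real" where
  "rho0 v = (\<Sum>i=1..n. norm (bp i v) powr ex i)"

lemma rho_eq: "rho al n blk t x = \<bar>t\<bar> powr (1/al) + rho0 x"
  by (simp add: rho_def rho0_def ex_def)

lemma rho0_nonneg: "0 \<le> rho0 v"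
  unfolding rho0_def by (simp add: sum_nonneg)

lemma rho0_zero: "rho0 0 = 0"
  unfolding rho0_def by (simp add: bp_zero)

lemma rho0_minus: "rho0 (- v) = rho0 v"
  unfolding rho0_def by (simp add: bp_minus)

lemma rho0_add: "rho0 (x + y) \<le> rho0 x + rho0 y"
proof -
  have "norm (bp i (x + y)) powr ex i \<le> norm (bp i x) powr ex i + norm (bp i y) powr ex i"
    if "i \<in> {1..n}" for i
  proof -
    have "norm (bp i (x + y)) powr ex i \<le> (norm (bp i x) + norm (bp i y)) powr ex i"
      using that ex_pos[of i] by (intro powr_mono2) (auto simp: bp_add norm_triangle_ineq)
    also have "\<dots> \<le> norm (bp i x) powr ex i + norm (bp i y) powr ex i"
      using that ex_pos[of i] ex_le1[of i] by (intro powr_subadd) auto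
    finally show ?thesis .
  qed
  then show ?thesis unfolding rho0_def sum.distrib[symmetric] by (intro sum_mono) auto
qed

lemma rho0_diff: "rho0 (x - y) \<le> rho0 x + rho0 y"
  using rho0_add[of x "- y"] by (simp add: rho0_minus)

lemma bp_le_rho0: "i \<in> {1..n} \<Longrightarrow> norm (bp i v) powr ex i \<le> rho0 v"
  unfolding rho0_def by (rule member_le_sum) auto

lemma rho0_eq0: "rho0 v = 0 \<longleftrightarrow> v = 0"
proof
  assume "rho0 v = 0"
  then have "norm (bp i v) powr ex i = 0" if "i \<in> {1..n}" for i
    using bp_le_rho0[OF that, of v] by (simp add: order_antisym)
  then have "bp i v = 0" if "i \<in> {1..n}" for i using that by simp
  then have "(\<Sum>i\<in>{1..n}. bp i v) = 0" by (intro sum.neutral) auto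
  then show "v = 0" using sum_bp[of v] by simp
qed (simp add: rho0_zero)

lemma matrix_bound: "\<exists>B\<ge>1. \<forall>k<n. \<forall>w. norm (mpow A k *v w) \<le> B * norm w"
proof -
  define B where "B = 1 + (\<Sum>k<n. onorm ((*v) (mpow A k)))"
  have onn: "0 \<le> onorm ((*v) (mpow A k))" for k
    by (rule onorm_pos_le) simp
  have "norm (mpow A k *v w) \<le> B * norm w" if "k < n" for k w
  proof -
    have o1: "norm (mpow A k *v w) \<le> onorm ((*v) (mpow A k)) * norm w"
      by (rule onorm) simp
    have "onorm ((*v) (mpow A k)) \<le> (\<Sum>k<n. onorm ((*v) (mpow A k)))"
      by (rule member_le_sum) (use that onn in auto)
    then have "onorm ((*v) (mpow A k)) \<le> B" unfolding B_def by simp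
    then have "onorm ((*v) (mpow A k)) * norm w \<le> B * norm w"
      by (intro mult_right_mono) auto
    with o1 show ?thesis by linarith
  qed
  moreover have "B \<ge> 1" unfolding B_def using onn by (simp add: sum_nonneg)
  ultimately show ?thesis by blast
qed

lemma K0_bound: "\<exists>K\<ge>0. \<forall>\<tau> v. rho0 (E \<tau> *v v) \<le> K * (\<bar>\<tau>\<bar> powr (1/al) + rho0 v)"
proof -
  obtain B where B1: "B \<ge> 1" and Bb: "\<And>k w. k < n \<Longrightarrow> norm (mpow A k *v w) \<le> B * norm w"
    using matrix_bound by blast
  define K where "K = real n * real n * B"
  have "rho0 (E \<tau> *v v) \<le> K * (\<bar>\<tau>\<bar> powr (1/al) + rho0 v)" for \<tau> v
  proof -
    define R where "R = \<bar>\<tau>\<bar> powr (1/al) + rho0 v"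
    have R0: "0 \<le> R" unfolding R_def using rho0_nonneg by simp
    have trm: "(\<bar>\<tau>\<bar> ^ k * norm (bp (i - k) v)) powr ex i \<le> R" if i: "i \<in> {1..n}" for i k
    proof (cases "k < i")
      case False
      then have "i - k = 0" by simp
      then show ?thesis using R0 by (simp add: bp0)
    next
      case True
      define j where "j = i - k"
      have j1: "1 \<le> j" "j \<in> {1..n}" using True i unfolding j_def by auto
      have exi: "ex i = 1 / ((1 + al * (real j - 1)) + al * k)"
        unfolding ex_def j_def using True by (simp add: of_nat_diff algebra_simps)
      have "(\<bar>\<tau>\<bar> ^ k * norm (bp j v)) powr ex i \<le> \<bar>\<tau>\<bar> powr (1/al) + norm (bp j v) powr (1 / (1 + al * (real j - 1)))"
        unfolding exi using alpos j1 by (intro key_ineq) auto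
      also have "norm (bp j v) powr (1 / (1 + al * (real j - 1))) = norm (bp j v) powr ex j"
        by (simp add: ex_def)
      also have "\<dots> \<le> rho0 v" using bp_le_rho0[OF j1(2)] .
      finally show ?thesis unfolding R_def j_def by simp
    qed
    have blk_i: "norm (bp i (E \<tau> *v v)) powr ex i \<le> real n * B * R" if i: "i \<in> {1..n}" for i
    proof -
      have e0: "0 < ex i" "ex i \<le> 1" using i ex_pos ex_le1 by auto
      have beq: "bp i (E \<tau> *v v) = (\<Sum>k<n. (\<tau>^k / fact k) *\<^sub>R (mpow A k *v bp (i - k) v))"
        by (simp add: Ev bp_sum bp_scaleR bp_mpow)
      then have "norm (bp i (E \<tau> *v v)) \<le> (\<Sum>k<n. norm ((\<tau>^k / fact k) *\<^sub>R (mpow A k *v bp (i - k) v)))"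
        by (subst beq) (rule norm_sum)
      also have "\<dots> \<le> (\<Sum>k<n. B * (\<bar>\<tau>\<bar> ^ k * norm (bp (i - k) v)))"
      proof (rule sum_mono)
        fix k assume k: "k \<in> {..<n}"
        have f1: "\<bar>\<tau>^k / fact k\<bar> \<le> \<bar>\<tau>\<bar> ^ k"
          by (simp add: abs_divide power_abs divide_le_eq fact_ge_1 mult_le_cancel_left1)
        have "norm ((\<tau>^k / fact k) *\<^sub>R (mpow A k *v bp (i - k) v)) = \<bar>\<tau>^k / fact k\<bar> * norm (mpow A k *v bp (i - k) v)"
          by simp
        also have "\<dots> \<le> \<bar>\<tau>\<bar> ^ k * (B * norm (bp (i - k) v))"
          using f1 Bb[of k "bp (i - k) v"] k by (intro mult_mono) auto
        finally show "norm ((\<tau>^k / fact k) *\<^sub>R (mpow A k *v bp (i - k) v)) \<le> B * (\<bar>\<tau>\<bar> ^ k * norm (bp (i - k) v))"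
          by (simp add: ac_simps)
      qed
      finally have "norm (bp i (E \<tau> *v v)) powr ex i \<le> (\<Sum>k<n. B * (\<bar>\<tau>\<bar> ^ k * norm (bp (i - k) v))) powr ex i"
        using e0 by (intro powr_mono2) auto
      also have "\<dots> \<le> (\<Sum>k<n. (B * (\<bar>\<tau>\<bar> ^ k * norm (bp (i - k) v))) powr ex i)"
        using e0 B1 by (intro powr_subadd_sum) auto
      also have "\<dots> \<le> (\<Sum>k<n. B * R)"
      proof (rule sum_mono)
        fix k
        have "(B * (\<bar>\<tau>\<bar> ^ k * norm (bp (i - k) v))) powr ex i = B powr ex i * (\<bar>\<tau>\<bar> ^ k * norm (bp (i - k) v)) powr ex i"
          using B1 by (simp add: powr_mult)
        also have "\<dots> \<le> B * R"
        proof (rule mult_mono)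
          show "B powr ex i \<le> B" using B1 e0 powr_mono[of "ex i" 1 B] by simp
        qed (use trm[OF i, of k] B1 in auto)
        finally show "(B * (\<bar>\<tau>\<bar> ^ k * norm (bp (i - k) v))) powr ex i \<le> B * R" .
      qed
      also have "\<dots> = real n * B * R" by simp
      finally show ?thesis .
    qed
    have "rho0 (E \<tau> *v v) \<le> (\<Sum>i=1..n. real n * B * R)"
      unfolding rho0_def by (rule sum_mono) (use blk_i in auto)
    also have "\<dots> = K * R" unfolding K_def by simp
    finally show ?thesis unfolding R_def .
  qed
  moreover have "K \<ge> 0" unfolding K_def using B1 by simp
  ultimately show ?thesis by blast
qed

end



lemma mv_right_diff: "(M::real^'n^'m) *v (x - y) = M *v x - M *v y"
  by (simp add: matrix_vector_mult_def vec_eq_iff sum_subtractf algebra_simps)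

context qs begin

abbreviation d where "d \<equiv> qdist al n blk A"

lemma qdist_eq: "d (t, x) (s, y) =
   \<bar>t - s\<bar> powr (1/al) + (rho0 (E (s - t) *v x - y) + rho0 (x - E (t - s) *v y)) / 2"
  unfolding qdist_def by (simp only: mexp_E prod.case) (simp add: rho_eq field_simps)

lemma qdist_nonneg: "0 \<le> d p q"
  by (cases p; cases q) (simp add: qdist_eq rho0_nonneg)

lemma qdist_self: "d p p = 0"
  by (cases p) (simp add: qdist_eq E0 rho0_zero)

lemma qdist_zero: "d p q = 0 \<longleftrightarrow> p = q"
proof
  assume h: "d p q = 0"
  obtain t x s y where pq: "p = (t, x)" "q = (s, y)" by (cases p; cases q) auto
  have h': "\<bar>t - s\<bar> powr (1/al) + (rho0 (E (s - t) *v x - y) + rho0 (x - E (t - s) *v y)) / 2 = 0"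
    using h unfolding pq qdist_eq .
  note nn = rho0_nonneg[of "E (s - t) *v x - y"] rho0_nonneg[of "x - E (t - s) *v y"]
      powr_ge_zero[of "\<bar>t - s\<bar>" "1/al"]
  have h'': "\<bar>t - s\<bar> powr (1/al) + rho0 (E (s - t) *v x - y) / 2 + rho0 (x - E (t - s) *v y) / 2 = 0"
    using h' by (simp add: add_divide_distrib add.assoc)
  have a: "\<bar>t - s\<bar> powr (1/al) = 0" using h'' nn by linarith
  have b: "rho0 (x - E (t - s) *v y) = 0" using h'' nn by linarith
  from a have "t = s" by simp
  with b have "x = y" by (simp add: rho0_eq0 E0)
  with \<open>t = s\<close> show "p = q" using pq by simp
qed (simp add: qdist_self)

lemma qdist_sym: "d p q = d q p"
proof -
  obtain t x s y where pq: "p = (t, x)" "q = (s, y)" by (cases p; cases q) auto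
  have "rho0 (E (s - t) *v x - y) = rho0 (y - E (s - t) *v x)"
    using rho0_minus[of "y - E (s - t) *v x"] by simp
  moreover have "rho0 (x - E (t - s) *v y) = rho0 (E (t - s) *v y - x)"
    using rho0_minus[of "E (t - s) *v y - x"] by simp
  ultimately show ?thesis unfolding pq qdist_eq by (simp add: abs_minus_commute)
qed

lemma qdist_triangle: "\<exists>C>0. \<forall>p z q. d p q \<le> C * (d p z + d z q)"
proof -
  obtain K where K0: "K \<ge> 0" and Kb: "\<And>\<tau> v. rho0 (E \<tau> *v v) \<le> K * (\<bar>\<tau>\<bar> powr (1/al) + rho0 v)"
    using K0_bound by blast
  define c where "c = 2 powr (1/al)"
  define C where "C = c + K + 1"
  have c0: "0 < c" unfolding c_def by simp
  have "d p q \<le> C * (d p z + d z q)" for p z q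
  proof -
    obtain t x s y \<sigma> \<xi> where pq: "p = (t, x)" "q = (s, y)" "z = (\<sigma>, \<xi>)"
      by (cases p; cases q; cases z) auto
    define P1 where "P1 = \<bar>t - \<sigma>\<bar> powr (1/al)"
    define P2 where "P2 = \<bar>\<sigma> - s\<bar> powr (1/al)"
    define u1 where "u1 = E (\<sigma> - t) *v x - \<xi>"
    define u2 where "u2 = E (s - \<sigma>) *v \<xi> - y"
    define w1 where "w1 = x - E (t - \<sigma>) *v \<xi>"
    define w2 where "w2 = \<xi> - E (\<sigma> - s) *v y"
    have ea: "E (s - t) *v x - y = E (s - \<sigma>) *v u1 + u2"
      unfolding u1_def u2_def mv_right_diff E_mult by simp
    have eb: "x - E (t - s) *v y = w1 + E (t - \<sigma>) *v w2"
      unfolding w1_def w2_def mv_right_diff E_mult by simp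
    have P0: "0 \<le> P1" "0 \<le> P2" unfolding P1_def P2_def by auto
    have nn: "0 \<le> rho0 u1" "0 \<le> rho0 u2" "0 \<le> rho0 w1" "0 \<le> rho0 w2" by (auto simp: rho0_nonneg)
    have ts: "\<bar>t - s\<bar> powr (1/al) \<le> c * (P1 + P2)"
      using powr_add2[of "1/al" "t - \<sigma>" "\<sigma> - s"] alpos unfolding c_def P1_def P2_def by simp
    have ra: "rho0 (E (s - t) *v x - y) \<le> K * (P2 + rho0 u1) + rho0 u2"
    proof -
      have "rho0 (E (s - t) *v x - y) \<le> rho0 (E (s - \<sigma>) *v u1) + rho0 u2"
        unfolding ea by (rule rho0_add)
      also have "rho0 (E (s - \<sigma>) *v u1) \<le> K * (P2 + rho0 u1)"
        using Kb[of "s - \<sigma>" u1] unfolding P2_def by (simp add: abs_minus_commute)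
      finally show ?thesis by simp
    qed
    have rb: "rho0 (x - E (t - s) *v y) \<le> rho0 w1 + K * (P1 + rho0 w2)"
    proof -
      have "rho0 (x - E (t - s) *v y) \<le> rho0 w1 + rho0 (E (t - \<sigma>) *v w2)"
        unfolding eb by (rule rho0_add)
      also have "rho0 (E (t - \<sigma>) *v w2) \<le> K * (P1 + rho0 w2)"
        using Kb[of "t - \<sigma>" w2] unfolding P1_def by simp
      finally show ?thesis by simp
    qed
    have dpz: "d p z = P1 + (rho0 u1 + rho0 w1) / 2"
      unfolding pq qdist_eq P1_def u1_def w1_def ..
    have dzq: "d z q = P2 + (rho0 u2 + rho0 w2) / 2"
      unfolding pq qdist_eq P2_def u2_def w2_def ..
    have dpq: "d p q = \<bar>t - s\<bar> powr (1/al) + (rho0 (E (s - t) *v x - y) + rho0 (x - E (t - s) *v y)) / 2"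
      unfolding pq qdist_eq ..
    have i1: "c * P1 + K * P1 / 2 \<le> C * P1" unfolding C_def using P0 K0
      by (simp add: algebra_simps mult_right_mono)
    have i2: "c * P2 + K * P2 / 2 \<le> C * P2" unfolding C_def using P0 K0
      by (simp add: algebra_simps mult_right_mono)
    have i3: "K * rho0 u1 \<le> C * rho0 u1" "rho0 u2 \<le> C * rho0 u2"
         "rho0 w1 \<le> C * rho0 w1" "K * rho0 w2 \<le> C * rho0 w2"
      unfolding C_def using nn K0 c0 by (auto intro!: mult_right_mono simp: algebra_simps)
    have "d p q \<le> c * P1 + c * P2 + (K * P2 + K * rho0 u1 + rho0 u2 + rho0 w1 + K * P1 + K * rho0 w2) / 2"
      unfolding dpq using ts ra rb by (simp only: add_divide_distrib distrib_left; linarith)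
    also have "\<dots> \<le> C * P1 + C * P2 + (C * rho0 u1 + C * rho0 u2 + C * rho0 w1 + C * rho0 w2) / 2"
      using i1 i2 i3 by (simp only: add_divide_distrib; linarith)
    also have "\<dots> = C * (d p z + d z q)" unfolding dpz dzq by (simp add: field_simps)
    finally show ?thesis .
  qed
  moreover have "C > 0" unfolding C_def using c0 K0 by simp
  ultimately show ?thesis by blast
qed

end



lemma small_powr:
  fixes z e :: real
  assumes "0 \<le> z" "0 < e" "e \<le> 1" "z powr e \<le> 1"
  shows "z \<le> z powr e"
proof (cases "z = 0")
  case False
  have "z \<le> 1"
  proof (rule ccontr)
    assume "\<not> z \<le> 1"
    then have "1 < z powr e" using assms by (intro gr_one_powr) auto
    then show False using assms by linarith
  qed
  then have "z powr 1 \<le> z powr e" using assms by (intro powr_mono') auto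
  then show ?thesis using False assms by simp
qed simp

context qs begin

lemma bp_linear: "bounded_linear (bp i)"
proof -
  have "linear (bp i)" by (rule linearI) (simp_all add: bp_add bp_scaleR)
  then show ?thesis by (simp add: linear_conv_bounded_linear)
qed

lemma rho0_cont: "continuous_on S rho0"
proof -
  have "continuous_on S (\<lambda>v. norm (bp i v) powr ex i)" if "i \<in> {1..n}" for i
  proof (rule continuous_on_powr')
    show "continuous_on S (\<lambda>v. norm (bp i v))"
      by (intro continuous_on_norm linear_continuous_on bp_linear)
    show "\<forall>x\<in>S. 0 \<le> norm (bp i x) \<and> (norm (bp i x) = 0 \<longrightarrow> 0 < ex i)"
      using that ex_pos by auto
  qed simp
  then show ?thesis unfolding rho0_def[abs_def] by (intro continuous_on_sum) auto
qed

lemma mpow_cont: "continuous_on S (\<lambda>x. mpow A k *v x)"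
  by (intro linear_continuous_on matrix_vector_mul_bounded_linear)

lemma E_cont:
  assumes "continuous_on S f" "continuous_on S g"
  shows "continuous_on S (\<lambda>q. E (f q) *v g q)"
  unfolding Ev
  by (intro continuous_intros continuous_on_compose2[OF mpow_cont assms(2)] assms) auto

lemma qdist_cont: "continuous_on S (\<lambda>q. d q p)"
proof -
  obtain s y where p: "p = (s, y)" by (cases p) auto
  have eq: "(\<lambda>q. d q p) = (\<lambda>q. \<bar>fst q - s\<bar> powr (1/al) +
      (rho0 (E (s - fst q) *v snd q - y) + rho0 (snd q - E (fst q - s) *v y)) / 2)"
    by (auto simp: p qdist_eq)
  have c1: "continuous_on S (\<lambda>q::real \<times> (real^'N). \<bar>fst q - s\<bar> powr (1/al))"
    by (rule continuous_on_powr') (use alpos in \<open>auto intro!: continuous_intros\<close>)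
  have c2: "continuous_on S (\<lambda>q::real \<times> (real^'N). rho0 (E (s - fst q) *v snd q - y))"
    by (rule continuous_on_compose2[OF rho0_cont[of UNIV]])
       (auto intro!: continuous_intros E_cont)
  have c3: "continuous_on S (\<lambda>q::real \<times> (real^'N). rho0 (snd q - E (fst q - s) *v y))"
    by (rule continuous_on_compose2[OF rho0_cont[of UNIV]])
       (auto intro!: continuous_intros E_cont)
  show ?thesis unfolding eq by (intro continuous_intros c1 c2 c3) auto
qed

lemma norm_le_rho0:
  assumes "rho0 w \<le> 1"
  shows "norm w \<le> rho0 w"
proof -
  have "norm (bp i w) \<le> norm (bp i w) powr ex i" if "i \<in> {1..n}" for i
    using that ex_pos ex_le1 bp_le_rho0[OF that, of w] assms by (intro small_powr) auto
  then have "(\<Sum>i\<in>{1..n}. norm (bp i w)) \<le> rho0 w" unfolding rho0_def by (intro sum_mono) auto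
  then show ?thesis using norm_le_bp[of w] by linarith
qed

lemma small_d_close: "\<epsilon> > 0 \<Longrightarrow> \<exists>r>0. \<forall>q. d q p < r \<longrightarrow> dist q p < \<epsilon>"
proof -
  assume ep: "\<epsilon> > 0"
  obtain s y where p: "p = (s, y)" by (cases p) auto
  define e where "e = \<epsilon> / 3"
  have e0: "e > 0" unfolding e_def using ep by simp
  have "continuous_on UNIV (\<lambda>\<tau>::real. E \<tau> *v y)"
    by (intro E_cont continuous_intros)
  then obtain \<eta> where \<eta>0: "\<eta> > 0" and \<eta>: "\<And>\<tau>. dist \<tau> 0 < \<eta> \<Longrightarrow> dist (E \<tau> *v y) (E 0 *v y) < e"
    unfolding continuous_on_iff using e0 by (meson UNIV_I)
  define m where "m = min \<eta> e"
  have m0: "m > 0" unfolding m_def using \<eta>0 e0 by simp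
  define r where "r = min (1/4) (min (m powr (1/al)) (e / 2))"
  have r0: "r > 0" unfolding r_def using m0 e0 by simp
  have rm: "r powr al \<le> m"
  proof -
    have "r powr al \<le> (m powr (1/al)) powr al"
      unfolding r_def using alpos r0 by (intro powr_mono2) (auto simp: r_def)
    also have "\<dots> = m" using m0 alpos by (simp add: powr_powr)
    finally show ?thesis .
  qed
  have "dist q p < \<epsilon>" if dq: "d q p < r" for q
  proof -
    obtain t x where q: "q = (t, x)" by (cases q) auto
    have deq: "d q p = \<bar>t - s\<bar> powr (1/al) + rho0 (E (s - t) *v x - y) / 2 + rho0 (x - E (t - s) *v y) / 2"
      unfolding p q qdist_eq by (simp add: add_divide_distrib)
    note nn = rho0_nonneg[of "E (s - t) *v x - y"] rho0_nonneg[of "x - E (t - s) *v y"]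
    have t1: "\<bar>t - s\<bar> powr (1/al) < r" using dq deq nn by linarith
    have t2: "rho0 (x - E (t - s) *v y) < 2 * r" using dq deq nn powr_ge_zero[of "\<bar>t - s\<bar>" "1/al"] by linarith
    have ts: "\<bar>t - s\<bar> < m"
    proof -
      have "\<bar>t - s\<bar> = (\<bar>t - s\<bar> powr (1/al)) powr al"
        using alpos by (cases "t = s") (simp_all add: powr_powr)
      also have "\<dots> < r powr al" using t1 alpos by (intro powr_less_mono2) auto
      finally show ?thesis using rm by linarith
    qed
    have "2 * r \<le> 1/2" unfolding r_def by simp
    then have nx: "norm (x - E (t - s) *v y) < 2 * r"
      using norm_le_rho0[of "x - E (t - s) *v y"] t2 by linarith
    have "2 * r \<le> e" unfolding r_def by simp
    have ny: "norm (E (t - s) *v y - y) < e"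
      using \<eta>[of "t - s"] ts unfolding m_def by (simp add: E0 dist_norm)
    have "dist q p = norm (t - s, x - y)" unfolding p q by (simp add: dist_norm)
    also have "\<dots> \<le> norm (t - s) + norm (x - y)" by (rule norm_Pair_le)
    also have "norm (x - y) \<le> norm (x - E (t - s) *v y) + norm (E (t - s) *v y - y)"
      using norm_triangle_ineq[of "x - E (t - s) *v y" "E (t - s) *v y - y"] by simp
    finally have "dist q p \<le> \<bar>t - s\<bar> + norm (x - E (t - s) *v y) + norm (E (t - s) *v y - y)"
      by simp
    moreover have "\<bar>t - s\<bar> < e" using ts unfolding m_def by simp
    ultimately show ?thesis using nx ny \<open>2 * r \<le> e\<close> unfolding e_def by linarith
  qed
  then show ?thesis using r0 by blast
qed

lemma close_small_d: "r > 0 \<Longrightarrow> \<exists>\<delta>>0. \<forall>q. dist q p < \<delta> \<longrightarrow> d q p < r"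
proof -
  assume r0: "r > 0"
  have "continuous_on UNIV (\<lambda>q. d q p)" by (rule qdist_cont)
  then obtain \<delta> where "\<delta> > 0" "\<And>q. dist q p < \<delta> \<Longrightarrow> dist (d q p) (d p p) < r"
    unfolding continuous_on_iff using r0 by (meson UNIV_I)
  then show ?thesis using qdist_nonneg by (auto simp: qdist_self dist_real_def)
qed

lemma d_open_iff: "d_open X d U \<longleftrightarrow> openin (top_of_set X) U"
proof
  assume h: "d_open X d U"
  show "openin (top_of_set X) U"
    unfolding openin_euclidean_subtopology_iff
  proof (intro conjI ballI)
    show "U \<subseteq> X" using h by (simp add: d_open_def)
    fix x assume "x \<in> U"
    then obtain r where r: "r > 0" "dball X d x r \<subseteq> U" using h by (auto simp: d_open_def)
    obtain \<delta> where d0: "\<delta> > 0" and dd: "\<And>q. dist q x < \<delta> \<Longrightarrow> d q x < r" using close_small_d[OF r(1)] by blast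
    have "\<forall>x'\<in>X. dist x' x < \<delta> \<longrightarrow> x' \<in> U"
    proof (intro ballI impI)
      fix x' assume "x' \<in> X" "dist x' x < \<delta>"
      then have "x' \<in> dball X d x r" using dd by (simp add: dball_def)
      then show "x' \<in> U" using r by blast
    qed
    then show "\<exists>e>0. \<forall>x'\<in>X. dist x' x < e \<longrightarrow> x' \<in> U" using d0 by blast
  qed
next
  assume h: "openin (top_of_set X) U"
  show "d_open X d U" unfolding d_open_def
  proof (intro conjI ballI)
    show "U \<subseteq> X" using h by (simp add: openin_euclidean_subtopology_iff)
    fix x assume "x \<in> U"
    then obtain e where e: "e > 0" "\<forall>x'\<in>X. dist x' x < e \<longrightarrow> x' \<in> U"
      using h by (auto simp: openin_euclidean_subtopology_iff)
    obtain r where "r > 0" "\<And>q. d q x < r \<Longrightarrow> dist q x < e" using small_d_close[OF e(1)] by blast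
    then show "\<exists>r>0. dball X d x r \<subseteq> U" using e by (auto simp: dball_def)
  qed
qed

lemma dball_open: "d_open X d (dball X d x r)"
proof -
  have "dball X d x r = X \<inter> (\<lambda>q. d q x) -` {..<r}" by (auto simp: dball_def)
  moreover have "openin (top_of_set X) (X \<inter> (\<lambda>q. d q x) -` {..<r})"
    by (intro continuous_openin_preimage_gen qdist_cont) auto
  ultimately show ?thesis by (simp add: d_open_iff)
qed

end



context qs begin

definition Sset :: "real \<Rightarrow> (real^'N) set" where "Sset \<rho> = {v. rho0 v < \<rho>}"
definition Uset :: "real \<Rightarrow> real \<Rightarrow> (real^'N) set" where
  "Uset \<tau> \<rho> = {w. \<bar>\<tau>\<bar> powr (1/al) + (rho0 (E (-\<tau>) *v w) + rho0 w) / 2 < \<rho>}"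

lemma Sset_open: "open (Sset \<rho>)"
  unfolding Sset_def by (intro open_Collect_less rho0_cont continuous_on_const)

lemma Uset_open: "open (Uset \<tau> \<rho>)"
proof -
  have "continuous_on UNIV (\<lambda>w. rho0 (E (-\<tau>) *v w))"
    by (rule continuous_on_compose2[OF rho0_cont[of UNIV]]) (auto intro: mpow_cont linear_continuous_on)
  then show ?thesis
    unfolding Uset_def by (intro open_Collect_less rho0_cont continuous_intros) auto
qed

lemma Sset_bounded: "bounded (Sset \<rho>)"
proof -
  have "norm v \<le> (\<Sum>i\<in>{1..n}. \<bar>\<rho>\<bar> powr (1 / ex i))" if "v \<in> Sset \<rho>" for v
  proof -
    have "norm (bp i v) \<le> \<bar>\<rho>\<bar> powr (1 / ex i)" if i: "i \<in> {1..n}" for i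
    proof -
      have e: "0 < ex i" using i ex_pos by auto
      have "norm (bp i v) powr ex i \<le> \<bar>\<rho>\<bar>"
        using bp_le_rho0[OF i, of v] \<open>v \<in> Sset \<rho>\<close> unfolding Sset_def by auto
      then have "(norm (bp i v) powr ex i) powr (1 / ex i) \<le> \<bar>\<rho>\<bar> powr (1 / ex i)"
        using e by (intro powr_mono2) auto
      moreover have "(norm (bp i v) powr ex i) powr (1 / ex i) = norm (bp i v)"
        using e by (cases "bp i v = 0") (simp_all add: powr_powr)
      ultimately show ?thesis by simp
    qed
    then have "(\<Sum>i\<in>{1..n}. norm (bp i v)) \<le> (\<Sum>i\<in>{1..n}. \<bar>\<rho>\<bar> powr (1 / ex i))"
      by (intro sum_mono) auto
    then show ?thesis using norm_le_bp[of v] by linarith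
  qed
  then show ?thesis unfolding bounded_iff by blast
qed

lemma Sset_borel: "Sset \<rho> \<in> sets lborel"
  using Sset_open by simp

lemma Sset_lmeas: "Sset \<rho> \<in> lmeasurable"
  by (intro lmeasurable_open Sset_bounded Sset_open)

definition W :: "real \<Rightarrow> real" where "W \<rho> = measure lborel (Sset \<rho>)"

lemma W_emeasure: "emeasure lborel (Sset \<rho>) = ennreal (W \<rho>)"
  unfolding W_def using emeasure_bounded_finite[OF Sset_bounded[of \<rho>]]
  by (intro emeasure_eq_ennreal_measure) auto

lemma W_lebesgue: "measure lebesgue (Sset \<rho>) = W \<rho>"
  unfolding W_def using Sset_borel by simp

lemma W_nonneg: "0 \<le> W \<rho>" unfolding W_def by simp

lemma W_pos: "\<rho> > 0 \<Longrightarrow> 0 < W \<rho>"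
proof -
  assume r: "\<rho> > 0"
  obtain \<delta> where d0: "\<delta> > 0" and dd: "\<And>v. dist v 0 < \<delta> \<Longrightarrow> dist (rho0 v) (rho0 0) < \<rho>"
    using rho0_cont[of UNIV] r unfolding continuous_on_iff by (meson UNIV_I)
  have sub: "ball 0 \<delta> \<subseteq> Sset \<rho>"
  proof
    fix v assume "v \<in> ball (0::real^'N) \<delta>"
    then have "dist v 0 < \<delta>" by (simp add: dist_commute)
    then have "dist (rho0 v) 0 < \<rho>" using dd by (simp add: rho0_zero)
    then show "v \<in> Sset \<rho>" unfolding Sset_def using rho0_nonneg[of v] by (simp add: dist_real_def)
  qed
  have "0 < measure lborel (ball (0::real^'N) \<delta>)" using d0 by simp
  also have "\<dots> \<le> W \<rho>" unfolding W_def
    using sub by (intro measure_mono_fmeasurable) (auto intro!: fmeasurableI Sset_borel emeasure_bounded_finite Sset_bounded)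
  finally show ?thesis .
qed

definition sc :: "real \<Rightarrow> nat \<Rightarrow> real" where "sc l i = l powr (1 + al * (real i - 1))"
definition Dl :: "real \<Rightarrow> real^'N \<Rightarrow> real^'N" where "Dl l v = (\<chi> k. sc l (blk k) * v $ k)"

lemma bp_Dl: "bp i (Dl l v) = sc l i *\<^sub>R bp i v"
  by (simp add: vec_eq_iff blockpart_def Dl_def)

lemma sc_ex: "l > 0 \<Longrightarrow> i \<ge> 1 \<Longrightarrow> sc l i powr ex i = l"
proof -
  assume l: "l > 0" and i: "i \<ge> 1"
  have p: "1 + al * (real i - 1) > 0" using alpos i by (simp add: add_pos_nonneg)
  show ?thesis unfolding sc_def ex_def using l p by (simp add: powr_powr)
qed

lemma rho0_Dl: "l > 0 \<Longrightarrow> rho0 (Dl l v) = l * rho0 v"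
proof -
  assume l: "l > 0"
  have "norm (bp i (Dl l v)) powr ex i = l * norm (bp i v) powr ex i" if "i \<in> {1..n}" for i
  proof -
    have "norm (bp i (Dl l v)) = sc l i * norm (bp i v)" using l by (simp add: bp_Dl sc_def)
    then have "norm (bp i (Dl l v)) powr ex i = sc l i powr ex i * norm (bp i v) powr ex i"
      using l by (simp add: powr_mult sc_def)
    then show ?thesis using sc_ex[OF l, of i] that by simp
  qed
  then show ?thesis unfolding rho0_def by (simp add: sum_distrib_left)
qed

lemma Dl_inv: "l > 0 \<Longrightarrow> Dl l (Dl (1/l) v) = v"
proof -
  assume l: "l > 0"
  have "sc l i * sc (1/l) i = 1" for i
    unfolding sc_def using l by (simp add: powr_mult[symmetric] powr_divide)
  then show ?thesis by (simp add: Dl_def vec_eq_iff mult.assoc[symmetric])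
qed

definition kap :: "real \<Rightarrow> real" where "kap l = (\<Prod>k\<in>UNIV. sc l (blk k))"

lemma kap_pos: "l > 0 \<Longrightarrow> kap l > 0"
  unfolding kap_def sc_def by (intro prod_pos) auto

lemma W_scale: "l > 0 \<Longrightarrow> W (l * \<rho>) \<le> kap l * W \<rho>"
proof -
  assume l: "l > 0"
  have sub: "Sset (l * \<rho>) \<subseteq> Dl l ` Sset \<rho>"
  proof
    fix v assume "v \<in> Sset (l * \<rho>)"
    then have "rho0 v < l * \<rho>" by (simp add: Sset_def)
    then have "rho0 (Dl (1/l) v) < \<rho>" using l by (simp add: rho0_Dl field_simps)
    then show "v \<in> Dl l ` Sset \<rho>" using Dl_inv[OF l, of v] unfolding Sset_def by (metis image_eqI mem_Collect_eq)
  qed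
  have img: "Dl l ` Sset \<rho> = (\<lambda>x. \<chi> k. sc l (blk k) * x$k) ` Sset \<rho>"
    by (simp add: Dl_def[abs_def])
  have m1: "(\<lambda>x. \<chi> k. sc l (blk k) * x$k) ` Sset \<rho> \<in> lmeasurable"
    by (rule measurable_stretch[OF Sset_lmeas])
  have "W (l * \<rho>) = measure lebesgue (Sset (l * \<rho>))" by (simp add: W_lebesgue)
  also have "\<dots> \<le> measure lebesgue ((\<lambda>x. \<chi> k. sc l (blk k) * x$k) ` Sset \<rho>)"
    using sub m1 Sset_lmeas[of "l * \<rho>"] unfolding img
    by (intro measure_mono_fmeasurable) (auto simp: fmeasurable_def)
  also have "\<dots> = \<bar>\<Prod>k\<in>UNIV. sc l (blk k)\<bar> * measure lebesgue (Sset \<rho>)"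
    by (rule measure_stretch[OF Sset_lmeas])
  also have "\<dots> = kap l * W \<rho>" using kap_pos[OF l] by (simp add: kap_def W_lebesgue)
  finally show ?thesis .
qed

end



context qs begin

lemma U_upper: "Uset \<tau> \<rho> \<subseteq> (if \<bar>\<tau>\<bar> powr (1/al) < \<rho> then Sset (2 * \<rho>) else {})"
proof
  fix w assume "w \<in> Uset \<tau> \<rho>"
  then have h: "\<bar>\<tau>\<bar> powr (1/al) + rho0 (E (-\<tau>) *v w) / 2 + rho0 w / 2 < \<rho>"
    unfolding Uset_def by (simp add: add_divide_distrib add.assoc)
  have nn: "0 \<le> rho0 (E (-\<tau>) *v w)" "0 \<le> rho0 w" "0 \<le> \<bar>\<tau>\<bar> powr (1/al)" by (auto simp: rho0_nonneg)
  have a: "\<bar>\<tau>\<bar> powr (1/al) < \<rho>" using h nn by linarith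
  have b: "rho0 w < 2 * \<rho>" using h nn by linarith
  show "w \<in> (if \<bar>\<tau>\<bar> powr (1/al) < \<rho> then Sset (2 * \<rho>) else {})"
    using a b unfolding Sset_def by simp
qed

lemma U_lower_ex: "\<exists>c>0. c \<le> 1 \<and> (\<forall>\<tau> \<rho>. \<rho> > 0 \<longrightarrow> \<bar>\<tau>\<bar> powr (1/al) \<le> c * \<rho> \<longrightarrow> Sset (c * \<rho>) \<subseteq> Uset \<tau> \<rho>)"
proof -
  obtain K where K0: "K \<ge> 0" and Kb: "\<And>\<tau> v. rho0 (E \<tau> *v v) \<le> K * (\<bar>\<tau>\<bar> powr (1/al) + rho0 v)"
    using K0_bound by blast
  define c where "c = 1 / (2 * K + 4)"
  have c0: "c > 0" "c \<le> 1" unfolding c_def using K0 by auto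
  have "Sset (c * \<rho>) \<subseteq> Uset \<tau> \<rho>" if r: "\<rho> > 0" and t: "\<bar>\<tau>\<bar> powr (1/al) \<le> c * \<rho>" for \<tau> \<rho>
  proof
    fix w assume "w \<in> Sset (c * \<rho>)"
    then have w: "rho0 w < c * \<rho>" by (simp add: Sset_def)
    have "rho0 (E (-\<tau>) *v w) \<le> K * (\<bar>-\<tau>\<bar> powr (1/al) + rho0 w)" by (rule Kb)
    also have "\<dots> \<le> K * (c * \<rho> + c * \<rho>)"
    proof -
      have "\<bar>-\<tau>\<bar> powr (1/al) + rho0 w \<le> c * \<rho> + c * \<rho>" using t w by (simp only: abs_minus_cancel; linarith)
      then show ?thesis using K0 by (rule mult_left_mono)
    qed
    finally have e: "rho0 (E (-\<tau>) *v w) \<le> K * (c * \<rho> + c * \<rho>)" .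
    have "c * \<rho> * (3 + 2 * K) < 2 * \<rho>"
    proof -
      have "c * (3 + 2 * K) < 2" unfolding c_def using K0 by (simp add: field_simps)
      then show ?thesis using r by (simp add: mult.commute mult.left_commute)
    qed
    then have "\<bar>\<tau>\<bar> powr (1/al) + rho0 (E (-\<tau>) *v w) / 2 + rho0 w / 2 < \<rho>"
      using t w e by (simp add: algebra_simps)
    then show "w \<in> Uset \<tau> \<rho>" unfolding Uset_def by (simp add: add_divide_distrib add.assoc)
  qed
  then show ?thesis using c0 by blast
qed

definition cc where "cc = (SOME c. c > 0 \<and> c \<le> 1 \<and> (\<forall>\<tau> \<rho>. \<rho> > 0 \<longrightarrow> \<bar>\<tau>\<bar> powr (1/al) \<le> c * \<rho> \<longrightarrow> Sset (c * \<rho>) \<subseteq> Uset \<tau> \<rho>))"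

lemma cc: "cc > 0" "cc \<le> 1" "\<rho> > 0 \<Longrightarrow> \<bar>\<tau>\<bar> powr (1/al) \<le> cc * \<rho> \<Longrightarrow> Sset (cc * \<rho>) \<subseteq> Uset \<tau> \<rho>"
  using someI_ex[OF U_lower_ex] unfolding cc_def[symmetric] by auto

lemma Uset_borel: "Uset \<tau> \<rho> \<in> sets borel"
  using Uset_open by simp

lemma slice_eq: "{x. d (t, x) (s, y) < r} = (+) (- (E (t - s) *v y)) -` Uset (t - s) r"
proof -
  have "E (s - t) *v x - y = E (- (t - s)) *v (x - E (t - s) *v y)" for x
    by (simp add: mv_right_diff E_mult E0)
  then show ?thesis unfolding Uset_def by (auto simp: qdist_eq abs_minus_commute)
qed

lemma slice_measure: "emeasure lborel {x. d (t, x) (s, y) < r} = emeasure lborel (Uset (t - s) r)"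
proof -
  let ?a = "- (E (t - s) *v y)"
  have "emeasure lborel (Uset (t - s) r) = emeasure (distr lborel borel ((+) ?a)) (Uset (t - s) r)"
    by (simp add: lborel_distr_plus)
  also have "\<dots> = emeasure lborel ((+) ?a -` Uset (t - s) r \<inter> space lborel)"
    by (rule emeasure_distr) (auto simp: Uset_borel)
  finally show ?thesis by (simp add: slice_eq)
qed

lemma tpow_lt: "\<bar>\<tau>\<bar> powr (1/al) < \<rho> \<Longrightarrow> \<bar>\<tau>\<bar> < \<rho> powr al"
proof -
  assume h: "\<bar>\<tau>\<bar> powr (1/al) < \<rho>"
  have "\<bar>\<tau>\<bar> = (\<bar>\<tau>\<bar> powr (1/al)) powr al"
    using alpos by (cases "\<tau> = 0") (simp_all add: powr_powr)
  also have "\<dots> < \<rho> powr al" using h alpos by (intro powr_less_mono2) auto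
  finally show ?thesis .
qed

lemma tpow_le: "0 \<le> \<rho> \<Longrightarrow> \<bar>\<tau>\<bar> \<le> \<rho> powr al \<Longrightarrow> \<bar>\<tau>\<bar> powr (1/al) \<le> \<rho>"
proof -
  assume r: "0 \<le> \<rho>" and h: "\<bar>\<tau>\<bar> \<le> \<rho> powr al"
  have "\<bar>\<tau>\<bar> powr (1/al) \<le> (\<rho> powr al) powr (1/al)" using h alpos by (intro powr_mono2) auto
  also have "\<dots> = \<rho>" using alpos r by (cases "\<rho> = 0") (simp_all add: powr_powr)
  finally show ?thesis .
qed

definition L :: "real \<Rightarrow> real \<Rightarrow> real \<Rightarrow> real" where
  "L T s R = min T (s + R) - max (-T) (s - R)"

lemma L_alt: "s \<in> {-T..T} \<Longrightarrow> 0 \<le> R \<Longrightarrow> L T s R = min (T - s) R + min (s + T) R"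
  unfolding L_def by (auto simp: min_def max_def)

lemma L_nonneg: "s \<in> {-T..T} \<Longrightarrow> 0 \<le> R \<Longrightarrow> 0 \<le> L T s R"
  by (simp add: L_alt)

lemma L_pos: "s \<in> {-T..T} \<Longrightarrow> 0 < R \<Longrightarrow> 0 < T \<Longrightarrow> 0 < L T s R"
  by (simp add: L_alt min_def)

lemma L_scale: "s \<in> {-T..T} \<Longrightarrow> 0 \<le> R \<Longrightarrow> 1 \<le> k \<Longrightarrow> L T s (k * R) \<le> k * L T s R"
proof -
  assume s: "s \<in> {-T..T}" and R: "0 \<le> R" and k: "1 \<le> k"
  have m: "min a (k * R) \<le> k * min a R" if "0 \<le> a" for a
    using that R k mult_right_mono[of 1 k a] mult_right_mono[of 1 k R] by (auto simp: min_def)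
  have "L T s (k * R) = min (T - s) (k * R) + min (s + T) (k * R)"
    using s R k by (intro L_alt) auto
  also have "\<dots> \<le> k * min (T - s) R + k * min (s + T) R"
    using s by (intro add_mono m) auto
  also have "\<dots> = k * L T s R" using s R by (simp add: L_alt distrib_left)
  finally show ?thesis .
qed

lemma J_measure: "s \<in> {-T..T} \<Longrightarrow> 0 \<le> R \<Longrightarrow> emeasure lborel ({-T..T} \<inter> {s - R..s + R}) = ennreal (L T s R)"
  unfolding L_def by simp

end



context qs begin

lemma strip_closed: "closed (strip T :: (real \<times> (real^'N)) set)"
  unfolding strip_def by (intro closed_Times) auto

lemma strip_borel: "(strip T :: (real \<times> (real^'N)) set) \<in> sets borel"
  using strip_closed by (rule borel_closed)

lemma dball_eq: "dball (strip T) d p r = strip T \<inter> {q. d q p < r}"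
  by (auto simp: dball_def)

lemma dball_borel: "dball (strip T) d p r \<in> sets borel"
proof -
  have "open {q. d q p < r}" by (intro open_Collect_less qdist_cont continuous_on_const)
  then show ?thesis unfolding dball_eq using strip_borel by (intro sets.Int) auto
qed

lemma ball_fubini: "emeasure lborel (dball (strip T) d p r) =
   (\<integral>\<^sup>+t. emeasure lborel (Pair t -` dball (strip T) d p r) \<partial>lborel)"
proof -
  have "emeasure lborel (dball (strip T) d p r) = emeasure (lborel \<Otimes>\<^sub>M lborel) (dball (strip T) d p r)"
    by (simp add: lborel_prod)
  also have "\<dots> = (\<integral>\<^sup>+t. emeasure lborel (Pair t -` dball (strip T) d p r) \<partial>lborel)"
    by (rule lborel.emeasure_pair_measure_alt) (subst lborel_prod, simp add: dball_borel)
  finally show ?thesis .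
qed

lemma slice_ball: "emeasure lborel (Pair t -` dball (strip T) d (s, y) r) =
   indicator {-T..T} t * emeasure lborel (Uset (t - s) r)"
proof (cases "t \<in> {-T..T}")
  case True
  then have "Pair t -` dball (strip T) d (s, y) r = {x. d (t, x) (s, y) < r}"
    by (auto simp: dball_def strip_def)
  then show ?thesis using True by (simp add: slice_measure)
next
  case False
  then have "Pair t -` dball (strip T) d (s, y) r = {}"
    by (auto simp: dball_def strip_def)
  then show ?thesis using False by simp
qed

lemma ball_upper:
  assumes s: "s \<in> {-T..T}" and r: "r > 0"
  shows "emeasure lborel (dball (strip T) d (s, y) r) \<le> ennreal (W (2 * r) * L T s (r powr al))"
proof -
  define J where "J = {-T..T} \<inter> {s - r powr al..s + r powr al}"
  have J: "J \<in> sets lborel" unfolding J_def by simp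
  have "emeasure lborel (Pair t -` dball (strip T) d (s, y) r) \<le> ennreal (W (2 * r)) * indicator J t" for t
  proof (cases "t \<in> {-T..T}")
    case True
    have "emeasure lborel (Uset (t - s) r) \<le> emeasure lborel (if \<bar>t - s\<bar> powr (1/al) < r then Sset (2 * r) else {})"
      by (rule emeasure_mono[OF U_upper]) (auto simp: Sset_open)
    also have "\<dots> \<le> ennreal (W (2 * r)) * indicator J t"
    proof (cases "\<bar>t - s\<bar> powr (1/al) < r")
      case True
      then have "\<bar>t - s\<bar> < r powr al" by (rule tpow_lt)
      then have "t \<in> J" unfolding J_def using \<open>t \<in> {-T..T}\<close> by auto
      then show ?thesis using True by (simp add: W_emeasure)
    qed simp
    finally show ?thesis using True by (simp add: slice_ball)
  qed (simp add: slice_ball)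
  then have "emeasure lborel (dball (strip T) d (s, y) r) \<le> (\<integral>\<^sup>+t. ennreal (W (2 * r)) * indicator J t \<partial>lborel)"
    unfolding ball_fubini by (intro nn_integral_mono) auto
  also have "\<dots> = ennreal (W (2 * r)) * emeasure lborel J"
    using J by (rule nn_integral_cmult_indicator)
  also have "\<dots> = ennreal (W (2 * r) * L T s (r powr al))"
    using J_measure[OF s, of "r powr al"] L_nonneg[OF s, of "r powr al"] unfolding J_def[symmetric]
    by (simp add: ennreal_mult W_nonneg)
  finally show ?thesis .
qed

lemma ball_lower:
  assumes s: "s \<in> {-T..T}" and r: "r > 0"
  shows "ennreal (W (cc * r) * L T s ((cc * r) powr al)) \<le> emeasure lborel (dball (strip T) d (s, y) r)"
proof -
  define J where "J = {-T..T} \<inter> {s - (cc * r) powr al..s + (cc * r) powr al}"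
  have J: "J \<in> sets lborel" unfolding J_def by simp
  have "ennreal (W (cc * r)) * indicator J t \<le> emeasure lborel (Pair t -` dball (strip T) d (s, y) r)" for t
  proof (cases "t \<in> J")
    case True
    then have t: "t \<in> {-T..T}" "\<bar>t - s\<bar> \<le> (cc * r) powr al" unfolding J_def by auto
    have "\<bar>t - s\<bar> powr (1/al) \<le> cc * r" using t(2) cc r by (intro tpow_le) auto
    then have "Sset (cc * r) \<subseteq> Uset (t - s) r" using cc(3) r by blast
    then have "emeasure lborel (Sset (cc * r)) \<le> emeasure lborel (Uset (t - s) r)"
      by (rule emeasure_mono) (simp add: Uset_borel)
    then show ?thesis using True t by (simp add: slice_ball W_emeasure)
  qed simp
  then have "(\<integral>\<^sup>+t. ennreal (W (cc * r)) * indicator J t \<partial>lborel) \<le> emeasure lborel (dball (strip T) d (s, y) r)"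
    unfolding ball_fubini by (intro nn_integral_mono) auto
  moreover have "(\<integral>\<^sup>+t. ennreal (W (cc * r)) * indicator J t \<partial>lborel) = ennreal (W (cc * r)) * emeasure lborel J"
    using J by (rule nn_integral_cmult_indicator)
  moreover have "\<dots> = ennreal (W (cc * r) * L T s ((cc * r) powr al))"
    using J_measure[OF s, of "(cc * r) powr al"] L_nonneg[OF s, of "(cc * r) powr al"] unfolding J_def[symmetric]
    by (simp add: ennreal_mult W_nonneg)
  ultimately show ?thesis by simp
qed

end



context qs begin

lemma sets_eq: "sets (restrict_space lborel (strip T)) = sigma_sets (strip T) {U. d_open (strip T) d U}"
proof -
  let ?X = "strip T :: (real \<times> (real^'N)) set"
  have "sets (restrict_space lborel ?X) = (\<inter>) ?X ` sigma_sets UNIV {S. open S}"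
    by (simp add: sets_restrict_space sets_borel)
  also have "\<dots> = sigma_sets ?X ((\<inter>) ?X ` {S. open S})"
    by (rule sigma_sets_Int) (use strip_borel[of T] in \<open>auto simp: sets_borel\<close>)
  also have "(\<inter>) ?X ` {S. open S} = {U. d_open ?X d U}"
    by (auto simp: d_open_iff openin_open)
  finally show ?thesis .
qed

lemma doubling:
  assumes T: "T > 0"
  shows "\<exists>A'>0. \<forall>x\<in>strip T. \<forall>r>0.
        0 < emeasure (restrict_space lborel (strip T)) (dball (strip T) d x (2 * r))
      \<and> emeasure (restrict_space lborel (strip T)) (dball (strip T) d x (2 * r))
          \<le> ennreal A' * emeasure (restrict_space lborel (strip T)) (dball (strip T) d x r)
      \<and> emeasure (restrict_space lborel (strip T)) (dball (strip T) d x r) < \<infinity>"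
proof -
  define k where "k = (2 / cc) powr al"
  define A' where "A' = kap (4 / cc) * k"
  have cc0: "cc > 0" "cc \<le> 1" using cc by auto
  have k1: "1 \<le> k" unfolding k_def using cc0 alpos
    by (intro ge_one_powr_ge_zero) (auto simp: field_simps)
  have kap0: "kap (4 / cc) > 0" using cc0 by (intro kap_pos) simp
  have A0: "A' > 0" unfolding A'_def using kap0 k1 by simp
  have em: "emeasure (restrict_space lborel (strip T)) (dball (strip T) d x \<rho>) = emeasure lborel (dball (strip T) d x \<rho>)" for x \<rho>
    by (rule emeasure_restrict_space) (auto simp: strip_borel dball_def)
  have "0 < emeasure lborel (dball (strip T) d x (2 * r))
      \<and> emeasure lborel (dball (strip T) d x (2 * r)) \<le> ennreal A' * emeasure lborel (dball (strip T) d x r)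
      \<and> emeasure lborel (dball (strip T) d x r) < \<infinity>" if x: "x \<in> strip T" and r: "r > 0" for x r
  proof -
    obtain s y where xs: "x = (s, y)" by (cases x) auto
    have s: "s \<in> {-T..T}" using x xs by (simp add: strip_def)
    define R1 where "R1 = (cc * r) powr al"
    have R10: "0 \<le> R1" unfolding R1_def by simp
    have R2: "(2 * r) powr al = k * R1"
    proof -
      have e: "2 * r = (2 / cc) * (cc * r)" using cc0 by simp
      have "((2 / cc) * (cc * r)) powr al = (2/cc) powr al * (cc * r) powr al"
        using cc0 r by (intro powr_mult; auto)
      then show ?thesis unfolding k_def R1_def by (subst e) simp
    qed
    have LL: "L T s ((2 * r) powr al) \<le> k * L T s R1"
      unfolding R2 using s R10 k1 by (rule L_scale)
    have WW: "W (2 * (2 * r)) \<le> kap (4 / cc) * W (cc * r)"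
    proof -
      have "2 * (2 * r) = (4 / cc) * (cc * r)" using cc0 by simp
      then show ?thesis using W_scale[of "4 / cc" "cc * r"] cc0 by simp
    qed
    have prod: "W (2 * (2 * r)) * L T s ((2 * r) powr al) \<le> A' * (W (cc * r) * L T s R1)"
    proof -
      have "W (2 * (2 * r)) * L T s ((2 * r) powr al) \<le> (kap (4 / cc) * W (cc * r)) * (k * L T s R1)"
        using WW LL kap0 W_nonneg[of "cc * r"] by (intro mult_mono) (auto simp: W_nonneg L_nonneg[OF s] R10 k1)
      also have "\<dots> = A' * (W (cc * r) * L T s R1)" unfolding A'_def by (simp add: ac_simps)
      finally show ?thesis .
    qed
    have "emeasure lborel (dball (strip T) d x (2 * r)) \<le> ennreal (W (2 * (2 * r)) * L T s ((2 * r) powr al))"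
      unfolding xs using s r by (intro ball_upper) auto
    also have "\<dots> \<le> ennreal (A' * (W (cc * r) * L T s R1))"
      using prod by (rule ennreal_leI)
    also have "\<dots> = ennreal A' * ennreal (W (cc * r) * L T s R1)"
      using A0 by (intro ennreal_mult) (auto intro!: mult_nonneg_nonneg W_nonneg L_nonneg[OF s] R10)
    also have "\<dots> \<le> ennreal A' * emeasure lborel (dball (strip T) d x r)"
      unfolding xs R1_def using ball_lower[OF s r, of y] by (intro mult_left_mono) auto
    finally have up: "emeasure lborel (dball (strip T) d x (2 * r)) \<le> ennreal A' * emeasure lborel (dball (strip T) d x r)" .
    have "0 < W (cc * (2 * r)) * L T s ((cc * (2 * r)) powr al)"
      using cc0 r T s by (intro mult_pos_pos W_pos L_pos) auto
    then have "0 < ennreal (W (cc * (2 * r)) * L T s ((cc * (2 * r)) powr al))" by simp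
    also have "\<dots> \<le> emeasure lborel (dball (strip T) d x (2 * r))"
      unfolding xs using s r by (intro ball_lower) auto
    finally have pos: "0 < emeasure lborel (dball (strip T) d x (2 * r))" .
    have "emeasure lborel (dball (strip T) d x r) \<le> ennreal (W (2 * r) * L T s (r powr al))"
      unfolding xs using s r by (intro ball_upper) auto
    also have "\<dots> < \<infinity>" by simp
    finally have fin: "emeasure lborel (dball (strip T) d x r) < \<infinity>" .
    show ?thesis using pos up fin by simp
  qed
  then show ?thesis using A0 unfolding em by blast
qed

lemma homog: "T > 0 \<Longrightarrow> homogeneous_space (strip T) d (restrict_space lborel (strip T))"
proof -
  assume T: "T > 0"
  obtain C where C: "C > 0" "\<And>p z q. d p q \<le> C * (d p z + d z q)" using qdist_triangle by blast
  have "quasi_distance (strip T) d"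
    unfolding quasi_distance_def using qdist_nonneg qdist_zero qdist_sym C by blast
  moreover have "\<forall>x\<in>strip T. \<forall>r>0. d_open (strip T) d (dball (strip T) d x r)"
    using dball_open by blast
  moreover have "space (restrict_space lborel (strip T)) = strip T"
    by (simp add: space_restrict_space)
  ultimately show ?thesis unfolding homogeneous_space_def using sets_eq doubling[OF T] by blast
qed

end

theorem propositionC1:
  fixes \<alpha> :: real and n :: nat and dd :: "nat \<Rightarrow> nat"
    and blk :: "'N::finite \<Rightarrow> nat" and A :: "real^'N^'N"
  assumes "block_setting n dd blk A"
    and "0 < \<alpha>" and "\<alpha> \<le> 2"
  shows "(\<forall>T>0. \<forall>p\<in>strip T. \<forall>q\<in>strip T. qdist \<alpha> n blk A p q = 0 \<longleftrightarrow> p = q)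
       \<and> (\<forall>T>0. \<forall>p\<in>strip T. \<forall>q\<in>strip T. qdist \<alpha> n blk A p q = qdist \<alpha> n blk A q p)
       \<and> (\<exists>C>0. \<forall>T>0. \<forall>p\<in>strip T. \<forall>z\<in>strip T. \<forall>q\<in>strip T.
            qdist \<alpha> n blk A p q \<le> C * (qdist \<alpha> n blk A p z + qdist \<alpha> n blk A z q))
       \<and> (\<forall>T>0. homogeneous_space (strip T) (qdist \<alpha> n blk A)
                 (restrict_space lborel (strip T)))"
proof -
  interpret qs \<alpha> n dd blk A using assms by (unfold_locales) auto
  obtain C where C: "C > 0" "\<And>p z q. qdist \<alpha> n blk A p q \<le> C * (qdist \<alpha> n blk A p z + qdist \<alpha> n blk A z q)"
    using qdist_triangle by blast
  show ?thesis using qdist_zero qdist_sym C homog by blast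
qed


end
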